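(* For every $\epsilon\ge1$ and all sufficiently large $n$, there exists a binary $k$-PIR code $[N,n,k]^P$ with $k=\Theta(n^\epsilon)$ and $N=\mathcal{O}(n^{\epsilon^+})$, i.e., $N=\mathcal{O}(n^{\epsilon+\tau})$ for every $\tau>0$.
   Context: A binary $[N,n,k]^P$ code ($k$-PIR code) is a binary linear code of length $N$ encoding $n$ information bits such that for every information bit $x_i$ there exist $k$ mutually disjoint sets $R_{i,1},\dots,R_{i,k}\subseteq\{1,\dots,N\}$ such that, for each $j$, $x_i$ is a function of the codeword bits indexed by $R_{i,j}$. *)

theory Defs
  imports Complex_Main "HOL-Library.Z2" "HOL-Library.Landau_Symbols"
begin

text \<open>Messages: binary vectors of length n, represented as functions nat \<Rightarrow> bit
  vanishing outside {..<n}.\<close>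
definition msgs :: "nat \<Rightarrow> (nat \<Rightarrow> bit) set" where
  "msgs n = {x. \<forall>i. n \<le> i \<longrightarrow> x i = 0}"

definition encode :: "(nat \<Rightarrow> nat \<Rightarrow> bit) \<Rightarrow> nat \<Rightarrow> nat \<Rightarrow> (nat \<Rightarrow> bit) \<Rightarrow> (nat \<Rightarrow> bit)" where
  "encode G N n x = (\<lambda>j. if j < N then (\<Sum>i<n. G j i * x i) else 0)"

definition restrict_word :: "nat set \<Rightarrow> (nat \<Rightarrow> bit) \<Rightarrow> (nat \<Rightarrow> bit)" where
  "restrict_word R c = (\<lambda>j. if j \<in> R then c j else 0)"

definition is_PIR_code :: "(nat \<Rightarrow> nat \<Rightarrow> bit) \<Rightarrow> nat \<Rightarrow> nat \<Rightarrow> nat \<Rightarrow> bool" where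
  "is_PIR_code G N n k \<longleftrightarrow>
     inj_on (encode G N n) (msgs n) \<and>
     (\<forall>i<n. \<exists>R :: nat \<Rightarrow> nat set.
        (\<forall>j<k. R j \<subseteq> {..<N}) \<and>
        (\<forall>j<k. \<forall>j'<k. j \<noteq> j' \<longrightarrow> R j \<inter> R j' = {}) \<and>
        (\<forall>j<k. \<exists>f :: (nat \<Rightarrow> bit) \<Rightarrow> bit.
           \<forall>x\<in>msgs n. f (restrict_word (R j) (encode G N n x)) = x i))"

definition PIR_code_exists :: "nat \<Rightarrow> nat \<Rightarrow> nat \<Rightarrow> bool" where
  "PIR_code_exists N n k \<longleftrightarrow> (\<exists>G. is_PIR_code G N n k)"

end

theory Submission
  imports Defs "HOL-Algebra.Algebraic_Closure_Type"
begin

type_synonym K = "bit alg_closure"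

lemma two_K: "(2::K) = 0"
proof -
  have "(2::K) = to_ac (2::bit)" by (simp only: to_ac_numeral)
  also have "\<dots> = 0" by simp
  finally show ?thesis .
qed

lemma add_self_K [simp]: "(x::K) + x = 0"
proof -
  have "x + x = 2 * x" by simp
  thus ?thesis by (simp add: two_K)
qed

lemma minus_K: "- (x::K) = x"
  by (metis add_self_K add.inverse_unique)

lemma diff_K: "(x::K) - y = x + y"
  by (simp add: minus_K)

lemma sq_add_K: "((x::K) + y)^2 = x^2 + y^2"
proof -
  show ?thesis by (simp add: power2_sum two_K)
qed

lemma pow2_add_K: "((x::K) + y)^(2^j) = x^(2^j) + y^(2^j)"
proof (induction j)
  case 0 then show ?case by simp
next
  case (Suc j)
  have "(x+y)^(2^Suc j) = ((x+y)^(2^j))^2" by (simp add: power_mult[symmetric] mult.commute)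
  also have "\<dots> = (x^(2^j))^2 + (y^(2^j))^2" using Suc by (simp add: sq_add_K)
  also have "\<dots> = x^(2^Suc j) + y^(2^Suc j)" by (simp add: power_mult[symmetric] mult.commute)
  finally show ?case .
qed

lemma of_nat_even_K: "even n \<Longrightarrow> (of_nat n :: K) = 0"
  by (auto simp: two_K)



definition Fq :: "nat \<Rightarrow> K set" where "Fq s = {x. x^(2^s) = x}"

lemma Fq_0 [simp]: "0 \<in> Fq s" by (simp add: Fq_def)
lemma Fq_1 [simp]: "1 \<in> Fq s" by (simp add: Fq_def)
lemma Fq_add: "x \<in> Fq s \<Longrightarrow> y \<in> Fq s \<Longrightarrow> x + y \<in> Fq s"
  by (simp add: Fq_def pow2_add_K)
lemma Fq_diff: "x \<in> Fq s \<Longrightarrow> y \<in> Fq s \<Longrightarrow> x - y \<in> Fq s"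
  by (simp add: diff_K Fq_add)
lemma Fq_mult: "x \<in> Fq s \<Longrightarrow> y \<in> Fq s \<Longrightarrow> x * y \<in> Fq s"
  by (simp add: Fq_def power_mult_distrib)
lemma Fq_inverse: "x \<in> Fq s \<Longrightarrow> inverse x \<in> Fq s"
  by (simp add: Fq_def power_inverse)
lemma Fq_divide: "x \<in> Fq s \<Longrightarrow> y \<in> Fq s \<Longrightarrow> x / y \<in> Fq s"
  by (simp add: divide_inverse Fq_mult Fq_inverse)
lemma Fq_to_ac: "to_ac (b::bit) \<in> Fq s"
  by (cases b) auto
lemma Fq_prod: "finite A \<Longrightarrow> (\<And>i. i \<in> A \<Longrightarrow> f i \<in> Fq s) \<Longrightarrow> prod f A \<in> Fq s"
  by (induction A rule: finite_induct) (auto intro: Fq_mult)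
lemma Fq_sum: "finite A \<Longrightarrow> (\<And>i. i \<in> A \<Longrightarrow> f i \<in> Fq s) \<Longrightarrow> sum f A \<in> Fq s"
  by (induction A rule: finite_induct) (auto intro: Fq_add)

lemma no_double_root:
  fixes P r :: "K poly"
  assumes "P = [:-x,1:] * [:-x,1:] * r"
  shows "poly (pderiv P) x = 0"
  using assms by (simp only: pderiv_mult poly_add poly_mult) simp

lemma add_eq0_K: "(x::K) + y = 0 \<longleftrightarrow> x = y"
  by (metis add_self_K add.inverse_unique minus_K)

lemma card_Fq:
  assumes "s \<ge> 1"
  shows "finite (Fq s) \<and> card (Fq s) = 2^s"
proof -
  define q :: nat where "q = 2^s"
  have q2: "q \<ge> 2" using assms unfolding q_def
    by (metis one_le_numeral power_increasing power_one_right)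
  define P :: "K poly" where "P = monom 1 q + [:0,1:]"
  have degP: "degree P = q" unfolding P_def using q2
    by (subst degree_add_eq_left) (auto simp: degree_monom_eq)
  have lcP: "lead_coeff P = 1" using q2 unfolding degP unfolding P_def by (simp add: coeff_monom coeff_eq_0)
  have P0: "P \<noteq> 0" using degP q2 by auto
  obtain A where A: "size A = degree P" "P = smult (lead_coeff P) (\<Prod>x\<in>#A. [:-x, 1:])"
    using alg_closed_imp_factorization[OF P0] by blast
  have PA: "P = (\<Prod>x\<in>#A. [:-x, 1:])" using A(2) lcP by simp
  have evq: "even q" using assms unfolding q_def by simp
  have dP: "pderiv P = 1"
    unfolding P_def using evq by (simp add: pderiv_monom pderiv_add pderiv_pCons of_nat_even_K)
  have cnt: "count A x \<le> 1" for x
  proof (rule ccontr)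
    assume "\<not> count A x \<le> 1"
    hence "x \<in># A" by (metis count_eq_zero_iff le_0_eq not_le_imp_less less_imp_le_nat)
    then obtain B where B: "A = add_mset x B" by (metis multi_member_split)
    have "count B x \<ge> 1" using \<open>\<not> count A x \<le> 1\<close> B by simp
    hence "x \<in># B" by (simp add: Suc_le_eq)
    then obtain C where C: "B = add_mset x C" by (metis multi_member_split)
    have "P = [:-x,1:] * [:-x,1:] * (\<Prod>x\<in>#C. [:-x, 1:])" unfolding PA B C by (simp only: image_mset_add_mset prod_mset.add_mset mult.assoc)
    hence "poly (pderiv P) x = 0" by (rule no_double_root)
    thus False using dP by simp
  qed
  have roots: "Fq s = set_mset A"
  proof -
    have "y \<in> Fq s \<longleftrightarrow> poly P y = 0" for y
      unfolding Fq_def P_def q_def by (simp add: poly_monom add_eq0_K)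
    moreover have "poly P y = 0 \<longleftrightarrow> y \<in># A" for y
      unfolding PA poly_prod_mset by (auto simp: prod_mset_zero_iff)
    ultimately show ?thesis by auto
  qed
  have "A = mset_set (set_mset A)"
  proof (rule multiset_eqI)
    fix x
    show "count A x = count (mset_set (set_mset A)) x"
    proof (cases "x \<in># A")
      case True
      hence "count A x \<noteq> 0" by (simp only: count_eq_zero_iff not_not)
      hence "count A x = 1" using cnt[of x] by linarith
      thus ?thesis using True by (simp add: count_mset_set')
    next
      case False
      hence "count A x = 0" by (simp add: count_eq_zero_iff)
      thus ?thesis using False by (simp add: count_mset_set')
    qed
  qed
  hence "size A = card (set_mset A)" by (metis size_mset_set)
  thus ?thesis using roots A(1) degP q_def by simp
qed

definition tr :: "nat \<Rightarrow> K \<Rightarrow> K" where "tr s y = (\<Sum>j<s. y^(2^j))"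

lemma tr_add: "tr s (u + v) = tr s u + tr s v"
  by (simp add: tr_def pow2_add_K sum.distrib)

lemma sq_sum_K: "finite A \<Longrightarrow> (\<Sum>i\<in>A. f i)^2 = (\<Sum>i\<in>A. (f i)^2 :: K)"
  by (induction A rule: finite_induct) (auto simp: sq_add_K)

lemma tr_01:
  assumes "y \<in> Fq s"
  shows "tr s y = 0 \<or> tr s y = 1"
proof -
  define f where "f j = y^(2^j)" for j :: nat
  have "(tr s y)^2 = (\<Sum>j<s. f (Suc j))"
    unfolding tr_def f_def by (simp add: sq_sum_K power_mult[symmetric] mult.commute)
  also have "\<dots> = (\<Sum>j<s. f j) + f s - f 0"
  proof -
    have "(\<Sum>j<Suc s. f j) = f 0 + (\<Sum>j<s. f (Suc j))" by (rule sum.lessThan_Suc_shift)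
    moreover have "(\<Sum>j<Suc s. f j) = (\<Sum>j<s. f j) + f s" by simp
    ultimately show ?thesis by (simp add: algebra_simps)
  qed
  also have "f s = f 0" using assms unfolding f_def Fq_def by simp
  finally have "(tr s y)^2 = tr s y" unfolding tr_def f_def by simp
  hence "tr s y * (tr s y - 1) = 0" by (simp add: power2_eq_square algebra_simps)
  thus ?thesis by auto
qed

lemma tr_range: "y \<in> Fq s \<Longrightarrow> to_ac (of_ac (tr s y)) = tr s y"
  using tr_01[of y s] by (auto intro: to_ac_of_ac)

lemma tr_scal: "tr s (to_ac b * y) = to_ac b * tr s y"
  by (cases b) (auto simp: tr_def power_0_left)

lemma tr_nondeg:
  assumes s: "s \<ge> 1" and y: "y \<in> Fq s" "y \<noteq> 0" and h: "\<And>w. w \<in> Fq s \<Longrightarrow> tr s (w * y) = 0"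
  shows False
proof -
  define T :: "K poly" where "T = (\<Sum>j<s. monom 1 (2^j))"
  have polyT: "poly T z = tr s z" for z unfolding T_def tr_def by (simp add: poly_sum poly_monom)
  have "coeff T (2^(s-1)) = (\<Sum>j<s. if 2^j = (2::nat)^(s-1) then 1 else 0)"
    unfolding T_def by (simp add: coeff_sum coeff_monom)
  also have "\<dots> = (\<Sum>j\<in>{s-1}. 1)"
    by (rule sum.mono_neutral_cong_right) (use s in auto)
  finally have "coeff T (2^(s-1)) = 1" by simp
  hence T0: "T \<noteq> 0" by auto
  have degT: "degree T \<le> 2^(s-1)" unfolding T_def
  proof (rule degree_sum_le)
    fix j assume "j \<in> {..<s}"
    hence "(2::nat)^j \<le> 2^(s-1)" by (intro power_increasing) auto
    thus "degree (monom (1::K) (2^j)) \<le> 2^(s-1)" by (simp add: degree_monom_eq)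
  qed simp
  have sub: "Fq s \<subseteq> {z. poly T z = 0}"
  proof
    fix z assume z: "z \<in> Fq s"
    have "z = (z / y) * y" using y by simp
    hence "tr s z = 0" using h[of "z/y"] Fq_divide[OF z y(1)] by metis
    thus "z \<in> {z. poly T z = 0}" by (simp add: polyT)
  qed
  have "card (Fq s) \<le> card {z. poly T z = 0}"
    by (rule card_mono[OF poly_roots_finite[OF T0] sub])
  also have "\<dots> \<le> degree T" by (rule card_poly_roots_bound[OF T0])
  finally have c: "card (Fq s) \<le> degree T" .
  have "(2::nat)^s \<le> 2^(s-1)" using c card_Fq[OF s] degT by linarith
  moreover have "(2::nat)^(s-1) < 2^s" using s by (intro power_strict_increasing) auto
  ultimately show False by linarith
qed



definition dig :: "nat \<Rightarrow> nat \<Rightarrow> nat \<Rightarrow> nat" where "dig b p l = p div b^l mod b"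

lemma dig_0: "dig b p 0 = p mod b" by (simp add: dig_def)
lemma dig_Suc: "dig b p (Suc l) = dig b (p div b) l"
  by (simp add: dig_def div_mult2_eq)
lemma dig_less: "b \<ge> 1 \<Longrightarrow> dig b p l < b" by (simp add: dig_def)

lemma dig_inj:
  assumes "b \<ge> 1"
  shows "x < b^M \<Longrightarrow> y < b^M \<Longrightarrow> (\<forall>l<M. dig b x l = dig b y l) \<Longrightarrow> x = y"
proof (induction M arbitrary: x y)
  case 0 thus ?case by simp
next
  case (Suc M)
  have "x div b < b^M" using Suc.prems(1) assms
    by (simp add: less_mult_imp_div_less mult.commute)
  moreover have "y div b < b^M" using Suc.prems(2) assms
    by (simp add: less_mult_imp_div_less mult.commute)
  moreover have "\<forall>l<M. dig b (x div b) l = dig b (y div b) l"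
    using Suc.prems(3) by (auto simp flip: dig_Suc)
  ultimately have "x div b = y div b" using Suc.IH by blast
  moreover have "x mod b = y mod b" using Suc.prems(3) by (auto simp: dig_0[symmetric])
  ultimately show ?case by (metis div_mult_mod_eq)
qed

lemma dig_surj:
  assumes "b \<ge> 1"
  shows "(\<forall>l<M. f l < b) \<Longrightarrow> \<exists>p<b^M. \<forall>l<M. dig b p l = f l"
proof (induction M arbitrary: f)
  case 0 thus ?case by simp
next
  case (Suc M)
  obtain p' where p': "p' < b^M" "\<forall>l<M. dig b p' l = f (Suc l)"
    using Suc.IH[of "\<lambda>l. f (Suc l)"] Suc.prems by auto
  define p where "p = f 0 + b * p'"
  have f0: "f 0 < b" using Suc.prems by auto
  have "p < b^Suc M"
  proof -
    have "p' + 1 \<le> b^M" using p'(1) by simp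
    hence "b * (p' + 1) \<le> b * b^M" by (rule mult_le_mono2)
    hence "b * p' + b \<le> b^Suc M" by (simp add: algebra_simps)
    thus ?thesis unfolding p_def using f0 by linarith
  qed
  moreover have "p div b = p'" "p mod b = f 0" unfolding p_def using f0 by auto
  hence "\<forall>l<Suc M. dig b p l = f l" using p'(2)
    by (auto simp: dig_0 dig_Suc less_Suc_eq_0_disj)
  ultimately show ?case by blast
qed

definition en :: "nat \<Rightarrow> nat \<Rightarrow> K" where
  "en s = (SOME h. bij_betw h {..<2^s} (Fq s))"

lemma en_bij: "s \<ge> 1 \<Longrightarrow> bij_betw (en s) {..<2^s} (Fq s)"
proof -
  assume s: "s \<ge> 1"
  obtain h where "bij_betw h {0..<card (Fq s)} (Fq s)"
    using ex_bij_betw_nat_finite card_Fq[OF s] by blast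
  hence "bij_betw h {..<2^s} (Fq s)" using card_Fq[OF s] by (simp add: atLeast0LessThan)
  thus ?thesis unfolding en_def by (rule someI[where P="\<lambda>h. bij_betw h {..<2^s} (Fq s)"])
qed

lemma en_in: "s \<ge> 1 \<Longrightarrow> r < 2^s \<Longrightarrow> en s r \<in> Fq s"
  using en_bij[of s] by (auto simp: bij_betw_def)

lemma en_inj: "s \<ge> 1 \<Longrightarrow> r < 2^s \<Longrightarrow> r' < 2^s \<Longrightarrow> en s r = en s r' \<Longrightarrow> r = r'"
  using en_bij[of s] by (auto simp: bij_betw_def inj_on_def)

lemma en_surj: "s \<ge> 1 \<Longrightarrow> w \<in> Fq s \<Longrightarrow> \<exists>r<2^s. en s r = w"
proof -
  assume "s \<ge> 1" "w \<in> Fq s"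
  hence "w \<in> en s ` {..<2^s}" using en_bij[of s] by (simp add: bij_betw_def)
  thus ?thesis by auto
qed



definition pt :: "nat \<Rightarrow> nat \<Rightarrow> nat \<Rightarrow> K" where "pt s p l = en s (dig (2^s) p l)"
definition ipt :: "nat \<Rightarrow> nat \<Rightarrow> nat \<Rightarrow> nat \<Rightarrow> K" where "ipt s a i l = en s (dig a i l)"
definition lag :: "nat \<Rightarrow> nat \<Rightarrow> nat \<Rightarrow> nat \<Rightarrow> (nat \<Rightarrow> K) \<Rightarrow> K" where
  "lag s m a i v = (\<Prod>l<m. \<Prod>r\<in>{..<a} - {dig a i l}. (v l - en s r) / (en s (dig a i l) - en s r))"
definition LP :: "nat \<Rightarrow> nat \<Rightarrow> nat \<Rightarrow> nat \<Rightarrow> (nat \<Rightarrow> K) \<Rightarrow> (nat \<Rightarrow> K) \<Rightarrow> K poly" where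
  "LP s m a i P d = (\<Prod>l<m. \<Prod>r\<in>{..<a} - {dig a i l}.
      [:(P l - en s r) / (en s (dig a i l) - en s r), d l / (en s (dig a i l) - en s r):])"
definition val :: "nat \<Rightarrow> nat \<Rightarrow> nat \<Rightarrow> nat \<Rightarrow> (nat \<Rightarrow> bit) \<Rightarrow> (nat \<Rightarrow> K) \<Rightarrow> K" where
  "val s m a n x v = (\<Sum>i<n. to_ac (x i) * lag s m a i v)"
definition Gm :: "nat \<Rightarrow> nat \<Rightarrow> nat \<Rightarrow> nat \<Rightarrow> nat \<Rightarrow> bit" where
  "Gm s m a c i = of_ac (tr s (en s (c div (2^s)^m) * lag s m a i (pt s (c mod (2^s)^m))))"
definition dir :: "nat \<Rightarrow> nat \<Rightarrow> nat \<Rightarrow> K" where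
  "dir s j l = (if l = 0 then 1 else en s (dig (2^s) j (l-1)))"
definition Line :: "nat \<Rightarrow> nat \<Rightarrow> nat \<Rightarrow> nat \<Rightarrow> nat \<Rightarrow> nat set" where
  "Line s m a i j = {p. p < (2^s)^m \<and> (\<exists>t \<in> Fq s - {0}. \<forall>l<m. pt s p l = ipt s a i l + t * dir s j l)}"
definition Rset :: "nat \<Rightarrow> nat \<Rightarrow> nat \<Rightarrow> nat \<Rightarrow> nat \<Rightarrow> nat set" where
  "Rset s m a i j = {c. c < (2^s)^(Suc m) \<and> c mod (2^s)^m \<in> Line s m a i j}"

lemma pt_Fq: "s \<ge> 1 \<Longrightarrow> pt s p l \<in> Fq s"
  unfolding pt_def by (rule en_in) (auto intro: dig_less)

lemma ipt_Fq: "s \<ge> 1 \<Longrightarrow> 1 \<le> a \<Longrightarrow> a \<le> 2^s \<Longrightarrow> ipt s a i l \<in> Fq s"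
proof -
  assume "s \<ge> 1" "1 \<le> a" "a \<le> 2^s"
  moreover from this have "dig a i l < 2^s" using dig_less[of a i l] by linarith
  ultimately show ?thesis unfolding ipt_def by (intro en_in) auto
qed

lemma dir_Fq: "s \<ge> 1 \<Longrightarrow> dir s j l \<in> Fq s"
  unfolding dir_def by (auto intro!: en_in dig_less)

lemma lag_cong: "(\<And>l. l < m \<Longrightarrow> v l = v' l) \<Longrightarrow> lag s m a i v = lag s m a i v'"
  unfolding lag_def by (intro prod.cong) auto

lemma val_cong: "(\<And>l. l < m \<Longrightarrow> v l = v' l) \<Longrightarrow> val s m a n x v = val s m a n x v'"
  unfolding val_def by (intro sum.cong refl) (metis lag_cong)

lemma lag_Fq:
  assumes "s \<ge> 1" "a \<le> 2^s" "\<And>l. l < m \<Longrightarrow> v l \<in> Fq s"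
  shows "lag s m a i v \<in> Fq s"
  unfolding lag_def
proof (intro Fq_prod)
  fix l r assume l: "l \<in> {..<m}" and r: "r \<in> {..<a} - {dig a i l}"
  have "a \<ge> 1" using r by auto
  hence "dig a i l < 2^s" using assms(2) dig_less[of a i l] by linarith
  moreover have "r < 2^s" using r assms(2) by auto
  ultimately show "(v l - en s r) / (en s (dig a i l) - en s r) \<in> Fq s"
    using assms l by (intro Fq_divide Fq_diff en_in) auto
qed auto

lemma lag_ipt:
  assumes s: "s \<ge> 1" and a: "1 \<le> a" "a \<le> 2^s" and i: "i < a^m" "i' < a^m"
  shows "lag s m a i (ipt s a i') = (if i = i' then 1 else 0)"
proof (cases "i = i'")
  case True
  have "lag s m a i (ipt s a i') = (\<Prod>l<m. \<Prod>r\<in>{..<a} - {dig a i l}. (1::K))"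
    unfolding lag_def True ipt_def
  proof (intro prod.cong refl)
    fix l r assume r: "r \<in> {..<a} - {dig a i' l}"
    have "dig a i' l < a" using a by (intro dig_less) auto
    hence "en s (dig a i' l) \<noteq> en s r" using r a en_inj[OF s, of "dig a i' l" r] by auto
    thus "(en s (dig a i' l) - en s r) / (en s (dig a i' l) - en s r) = 1" by simp
  qed
  thus ?thesis using True by simp
next
  case False
  obtain l where l: "l < m" "dig a i l \<noteq> dig a i' l"
    using dig_inj[OF a(1) i(1) i(2)] False by blast
  have "dig a i' l < a" using a by (intro dig_less) auto
  hence "(\<Prod>r\<in>{..<a} - {dig a i l}. (ipt s a i' l - en s r) / (en s (dig a i l) - en s r)) = 0"
    using l by (intro prod_zero) (auto simp: ipt_def intro!: bexI[of _ "dig a i' l"])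
  hence "lag s m a i (ipt s a i') = 0" unfolding lag_def using l by (intro prod_zero) auto
  thus ?thesis using False by simp
qed

lemma lag_line: "lag s m a i (\<lambda>l. P l + t * d l) = poly (LP s m a i P d) t"
  unfolding lag_def LP_def poly_prod
  by (intro prod.cong refl) (simp add: add_divide_distrib diff_divide_distrib algebra_simps)

lemma deg_lin: "degree [:x, y:] \<le> 1"
  by (metis degree_pCons_le degree_pCons_0 One_nat_def)

lemma degree_LP: "degree (LP s m a i P d) \<le> m * (a - 1)"
proof -
  have inner: "degree (\<Prod>r\<in>{..<a} - {dig a i l}.
      [:(P l - en s r) / (en s (dig a i l) - en s r), d l / (en s (dig a i l) - en s r):]) \<le> a - 1"
    for l
  proof -
    have "degree (\<Prod>r\<in>{..<a} - {dig a i l}.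
      [:(P l - en s r) / (en s (dig a i l) - en s r), d l / (en s (dig a i l) - en s r):])
      \<le> (\<Sum>r\<in>{..<a} - {dig a i l}. 1)"
    proof (rule order_trans[OF degree_prod_sum_le])
      show "sum (degree \<circ> (\<lambda>r. [:(P l - en s r) / (en s (dig a i l) - en s r),
          d l / (en s (dig a i l) - en s r):])) ({..<a} - {dig a i l}) \<le> (\<Sum>r\<in>{..<a} - {dig a i l}. 1)"
        by (rule sum_mono) (simp only: o_def deg_lin)
    qed simp
    also have "\<dots> \<le> a - 1"
    proof (cases "dig a i l < a")
      case True thus ?thesis by (simp add: card_Diff_singleton)
    next
      case False hence "{..<a} - {dig a i l} = {..<a}" by auto
      moreover have "a = 0" using False by (cases "a = 0") (auto simp: dig_def)
      ultimately show ?thesis by simp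
    qed
    finally show ?thesis .
  qed
  have "degree (LP s m a i P d) \<le> (\<Sum>l<m. a - 1)"
    unfolding LP_def
  proof (rule order_trans[OF degree_prod_sum_le])
    show "sum (degree \<circ> (\<lambda>l. \<Prod>r\<in>{..<a} - {dig a i l}.
      [:(P l - en s r) / (en s (dig a i l) - en s r), d l / (en s (dig a i l) - en s r):])) {..<m}
      \<le> (\<Sum>l<m. a - 1)"
      by (rule sum_mono) (simp only: o_def inner)
  qed simp
  thus ?thesis by simp
qed

lemma tr_0: "tr s 0 = 0" by (simp add: tr_def power_0_left)

lemma tr_sum: "finite A \<Longrightarrow> tr s (sum f A) = (\<Sum>i\<in>A. tr s (f i))"
proof (induction A rule: finite_induct)
  case empty thus ?case by (simp add: tr_0)
next
  case (insert x F) thus ?case by (simp add: tr_add)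
qed

lemma enc_val:
  assumes s: "s \<ge> 1" and a: "a \<le> 2^s" and c: "c < (2^s)^(Suc m)"
  shows "to_ac (encode (Gm s m a) ((2^s)^(Suc m)) n x c)
         = tr s (en s (c div (2^s)^m) * val s m a n x (pt s (c mod (2^s)^m)))"
proof -
  define w where "w = en s (c div (2^s)^m)"
  define v where "v = pt s (c mod (2^s)^m)"
  have "c div (2^s)^m < 2^s" using c by (simp add: less_mult_imp_div_less)
  hence w: "w \<in> Fq s" unfolding w_def using s by (rule en_in[rotated])
  have lagF: "lag s m a i v \<in> Fq s" for i unfolding v_def using s a by (intro lag_Fq pt_Fq) auto
  have "to_ac (encode (Gm s m a) ((2^s)^(Suc m)) n x c) = (\<Sum>i<n. to_ac (Gm s m a c i) * to_ac (x i))"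
  proof -
    have e: "encode (Gm s m a) ((2^s)^(Suc m)) n x c = (\<Sum>i<n. Gm s m a c i * x i)"
      unfolding encode_def by (simp only: if_P[OF c])
    show ?thesis by (simp only: e to_ac_sum to_ac_mult)
  qed
  also have "\<dots> = (\<Sum>i<n. tr s (w * lag s m a i v) * to_ac (x i))"
    unfolding Gm_def w_def[symmetric] v_def[symmetric]
    using w lagF by (intro sum.cong refl) (simp add: tr_range Fq_mult)
  also have "\<dots> = tr s (w * val s m a n x v)"
    unfolding val_def sum_distrib_left
    by (subst tr_sum) (auto intro!: sum.cong, metis mult.left_commute tr_scal mult.commute)
  finally show ?thesis unfolding w_def v_def .
qed



lemma line_disj:
  assumes s: "s \<ge> 1" and m: "m \<ge> 1" and j: "j < (2^s)^(m-1)" "j' < (2^s)^(m-1)"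
    and p: "p \<in> Line s m a i j" "p \<in> Line s m a i j'"
  shows "j = j'"
proof -
  obtain t where t: "t \<in> Fq s - {0}" "\<forall>l<m. pt s p l = ipt s a i l + t * dir s j l"
    using p(1) by (auto simp: Line_def)
  obtain t' where t': "t' \<in> Fq s - {0}" "\<forall>l<m. pt s p l = ipt s a i l + t' * dir s j' l"
    using p(2) by (auto simp: Line_def)
  have "t = t'" using t(2) t'(2) m by (auto simp: dir_def dest!: spec[of _ 0])
  have "dig (2^s) j l = dig (2^s) j' l" if l: "l < m - 1" for l
  proof -
    have "t * dir s j (Suc l) = t * dir s j' (Suc l)"
      using t(2) t'(2) l \<open>t = t'\<close> by (metis add_left_cancel less_diff_conv add.commute Suc_eq_plus1)
    hence "dir s j (Suc l) = dir s j' (Suc l)" using t(1) by simp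
    hence "en s (dig (2^s) j l) = en s (dig (2^s) j' l)" by (simp add: dir_def)
    thus ?thesis using en_inj[OF s] dig_less[of "2^s"] by simp
  qed
  thus ?thesis using dig_inj[of "2^s" j "m-1" j'] j by simp
qed

lemma recover:
  assumes s: "s \<ge> 1" and m: "m \<ge> 1" and a: "1 \<le> a" "m * (a - 1) + 2 \<le> 2^s" and n: "n \<le> a^m"
    and i: "i < n" and j: "j < (2^s)^(m-1)" and x: "x \<in> msgs n" and y: "y \<in> msgs n"
    and eq: "restrict_word (Rset s m a i j) (encode (Gm s m a) ((2^s)^(Suc m)) n x)
           = restrict_word (Rset s m a i j) (encode (Gm s m a) ((2^s)^(Suc m)) n y)"
  shows "x i = y i"
proof -
  define q :: nat where "q = 2^s"
  have "a - 1 \<le> m * (a - 1)" using m by simp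
  hence aq: "a \<le> 2^s" using a by linarith
  define P where "P = ipt s a i"
  define d where "d = dir s j"
  have PF: "P l \<in> Fq s" for l unfolding P_def using s a aq by (intro ipt_Fq) auto
  have dF: "d l \<in> Fq s" for l unfolding d_def using s by (rule dir_Fq)
  define H where "H = (\<Sum>i'<n. smult (to_ac (x i') - to_ac (y i')) (LP s m a i' P d))"
  have polyH: "poly H t = val s m a n x (\<lambda>l. P l + t * d l) - val s m a n y (\<lambda>l. P l + t * d l)" for t
    unfolding H_def val_def poly_sum poly_smult lag_line sum_subtractf[symmetric]
    by (intro sum.cong refl) (simp add: algebra_simps)
  have roots: "poly H t = 0" if t: "t \<in> Fq s - {0}" for t
  proof -
    define v where "v = (\<lambda>l. P l + t * d l)"
    have vF: "v l \<in> Fq s" for l unfolding v_def using PF dF t by (intro Fq_add Fq_mult) auto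
    have "\<forall>l. \<exists>r. l < m \<longrightarrow> r < 2^s \<and> en s r = v l" using en_surj[OF s vF] by blast
    then obtain f where f: "\<And>l. l < m \<Longrightarrow> f l < 2^s \<and> en s (f l) = v l" by metis
    obtain p where p: "p < (2^s)^m" "\<forall>l<m. dig (2^s) p l = f l"
      using dig_surj[of "2^s" m f] f by auto
    have ptp: "\<forall>l<m. pt s p l = v l" using p f by (simp add: pt_def)
    have pL: "p \<in> Line s m a i j"
      unfolding Line_def using p(1) t ptp by (auto simp: v_def P_def d_def)
    define \<delta> where "\<delta> = val s m a n x v - val s m a n y v"
    have \<delta>F: "\<delta> \<in> Fq s" unfolding \<delta>_def val_def using s aq vF
      by (intro Fq_diff Fq_sum Fq_mult Fq_to_ac lag_Fq) auto
    have trz: "tr s (w * \<delta>) = 0" if w: "w \<in> Fq s" for w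
    proof -
      obtain r where r: "r < 2^s" "en s r = w" using en_surj[OF s w] by blast
      define c where "c = p + (2^s)^m * r"
      have "c < (2^s)^m + (2^s)^m * r" using p(1) by (simp add: c_def)
      also have "\<dots> \<le> (2^s)^m * (2^s)" using r(1)
        by (metis Suc_leI mult.commute mult_Suc mult_le_mono1 add.commute)
      finally have c: "c < (2^s)^(Suc m)" by (simp add: mult.commute)
      have cm: "c mod (2^s)^m = p" "c div (2^s)^m = r" using p(1) by (auto simp: c_def)
      have "c \<in> Rset s m a i j" unfolding Rset_def using c cm pL by simp
      hence "encode (Gm s m a) ((2^s)^(Suc m)) n x c = encode (Gm s m a) ((2^s)^(Suc m)) n y c"
        using fun_cong[OF eq, of c] by (simp add: restrict_word_def)
      hence "tr s (w * val s m a n x (pt s p)) = tr s (w * val s m a n y (pt s p))"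
        using enc_val[OF s aq c, of n x] enc_val[OF s aq c, of n y] cm r(2) by simp
      moreover have "val s m a n x (pt s p) = val s m a n x v" "val s m a n y (pt s p) = val s m a n y v"
        using ptp by (auto intro: val_cong)
      ultimately have "tr s (w * val s m a n x v) = tr s (w * val s m a n y v)" by simp
      hence "tr s (w * val s m a n x v) + tr s (w * val s m a n y v) = 0" by simp
      thus ?thesis unfolding \<delta>_def by (simp add: diff_K distrib_left tr_add)
    qed
    have "\<delta> = 0" using tr_nondeg[OF s \<delta>F] trz by blast
    thus ?thesis unfolding polyH \<delta>_def v_def by simp
  qed
  have H0: "H = 0"
  proof (rule ccontr)
    assume H: "H \<noteq> 0"
    have "degree H \<le> m * (a - 1)" unfolding H_def
      by (intro degree_sum_le) (auto intro: order_trans[OF degree_smult_le] degree_LP[unfolded One_nat_def])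
    moreover have "card (Fq s - {0}) \<le> card {t. poly H t = 0}"
      using roots by (intro card_mono poly_roots_finite H) auto
    moreover have "card {t. poly H t = 0} \<le> degree H" by (rule card_poly_roots_bound[OF H])
    moreover have "card (Fq s - {0}) = 2^s - 1" using card_Fq[OF s] by (simp add: card_Diff_singleton)
    ultimately show False using a(2) by linarith
  qed
  have "poly H 0 = 0" using H0 by simp
  hence "val s m a n x P = val s m a n y P" using polyH[of 0] by simp
  moreover have "val s m a n z P = to_ac (z i)" for z
  proof -
    have "val s m a n z P = (\<Sum>i'<n. if i' = i then to_ac (z i) else 0)"
      unfolding val_def P_def
      using lag_ipt[OF s a(1) aq] i n by (intro sum.cong refl) auto
    also have "\<dots> = to_ac (z i)" using i by simp
    finally show ?thesis .
  qed
  ultimately show ?thesis by simp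
qed



lemma construction:
  assumes s: "s \<ge> 1" and m: "m \<ge> 1" and a: "1 \<le> a" "m * (a - 1) + 2 \<le> 2^s" and n: "n \<le> a^m"
    and k: "k \<le> (2^s)^(m-1)"
  shows "PIR_code_exists ((2^s)^(Suc m)) n k"
proof -
  define G where "G = Gm s m a"
  define N :: nat where "N = (2^s)^(Suc m)"
  have rec: "\<And>i j x y. i < n \<Longrightarrow> j < (2^s)^(m-1) \<Longrightarrow> x \<in> msgs n \<Longrightarrow> y \<in> msgs n \<Longrightarrow>
      restrict_word (Rset s m a i j) (encode G N n x) = restrict_word (Rset s m a i j) (encode G N n y)
      \<Longrightarrow> x i = y i"
    unfolding G_def N_def using recover[OF s m a n] by blast
  have inj: "inj_on (encode G N n) (msgs n)"
  proof (rule inj_onI)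
    fix x y assume x: "x \<in> msgs n" and y: "y \<in> msgs n" and e: "encode G N n x = encode G N n y"
    show "x = y"
    proof
      fix i show "x i = y i"
      proof (cases "i < n")
        case True
        have z: "(0::nat) < (2^s)^(m-1)" by simp
        show ?thesis by (rule rec[OF True z x y]) (simp add: e)
      next
        case False thus ?thesis using x y by (simp add: msgs_def)
      qed
    qed
  qed
  have "\<forall>i<n. \<exists>R :: nat \<Rightarrow> nat set.
        (\<forall>j<k. R j \<subseteq> {..<N}) \<and>
        (\<forall>j<k. \<forall>j'<k. j \<noteq> j' \<longrightarrow> R j \<inter> R j' = {}) \<and>
        (\<forall>j<k. \<exists>f :: (nat \<Rightarrow> bit) \<Rightarrow> bit.
           \<forall>x\<in>msgs n. f (restrict_word (R j) (encode G N n x)) = x i)"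
  proof (intro allI impI)
    fix i assume i: "i < n"
    define R where "R = Rset s m a i"
    have "\<forall>j<k. R j \<subseteq> {..<N}" by (auto simp: R_def Rset_def N_def)
    moreover have "\<forall>j<k. \<forall>j'<k. j \<noteq> j' \<longrightarrow> R j \<inter> R j' = {}"
    proof (intro allI impI)
      fix j j' assume j: "j < k" "j' < k" "j \<noteq> j'"
      show "R j \<inter> R j' = {}"
      proof (rule ccontr)
        assume "R j \<inter> R j' \<noteq> {}"
        then obtain c where "c \<in> R j" "c \<in> R j'" by blast
        hence "c mod (2^s)^m \<in> Line s m a i j" "c mod (2^s)^m \<in> Line s m a i j'"
          by (auto simp: R_def Rset_def)
        hence "j = j'" using line_disj[OF s m] j k by (meson order_less_le_trans)
        thus False using j by simp
      qed
    qed
    moreover have "\<forall>j<k. \<exists>f :: (nat \<Rightarrow> bit) \<Rightarrow> bit.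
           \<forall>x\<in>msgs n. f (restrict_word (R j) (encode G N n x)) = x i"
    proof (intro allI impI)
      fix j assume j: "j < k"
      define f where "f w = (SOME z. z \<in> msgs n \<and> restrict_word (R j) (encode G N n z) = w) i"
        for w :: "nat \<Rightarrow> bit"
      have "\<forall>x\<in>msgs n. f (restrict_word (R j) (encode G N n x)) = x i"
      proof
        fix x assume x: "x \<in> msgs n"
        define z where "z = (SOME z. z \<in> msgs n \<and> restrict_word (R j) (encode G N n z)
                                        = restrict_word (R j) (encode G N n x))"
        have "z \<in> msgs n \<and> restrict_word (R j) (encode G N n z) = restrict_word (R j) (encode G N n x)"
          unfolding z_def by (rule someI[of _ x]) (use x in simp)
        hence "z i = x i" using rec[OF i _ _ x] j k unfolding R_def by (meson order_less_le_trans)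
        thus "f (restrict_word (R j) (encode G N n x)) = x i" unfolding f_def z_def[symmetric] .
      qed
      thus "\<exists>f :: (nat \<Rightarrow> bit) \<Rightarrow> bit. \<forall>x\<in>msgs n. f (restrict_word (R j) (encode G N n x)) = x i"
        by blast
    qed
    ultimately show "\<exists>R :: nat \<Rightarrow> nat set.
        (\<forall>j<k. R j \<subseteq> {..<N}) \<and>
        (\<forall>j<k. \<forall>j'<k. j \<noteq> j' \<longrightarrow> R j \<inter> R j' = {}) \<and>
        (\<forall>j<k. \<exists>f :: (nat \<Rightarrow> bit) \<Rightarrow> bit.
           \<forall>x\<in>msgs n. f (restrict_word (R j) (encode G N n x)) = x i)" by blast
  qed
  with inj have "is_PIR_code G N n k" by (simp add: is_PIR_code_def)
  thus ?thesis unfolding PIR_code_exists_def N_def by blast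
qed



lemma finite_param:
  fixes \<epsilon> :: real
  assumes e: "\<epsilon> \<ge> 1" and n: "n \<ge> 1" and m: "m \<ge> 2"
  defines "B \<equiv> (real m + 2) * (real n powr (\<epsilon>/(real m - 1)) + 1)"
  defines "s \<equiv> nat \<lceil>log 2 B\<rceil>"
  shows "PIR_code_exists ((2^s)^(Suc m)) n (nat \<lceil>real n powr \<epsilon>\<rceil>)"
    and "real ((2^s)^(Suc m)) \<le> (4*(real m+2))^(Suc m) * real n powr (\<epsilon> * (real m + 1)/(real m - 1))"
proof -
  define a where "a = nat \<lceil>real n powr (1/real m)\<rceil>"
  define r where "r = real n powr (\<epsilon>/(real m - 1))"
  have n1: "real n \<ge> 1" using n by simp
  have m1: "real m - 1 > 0" using m by simp
  have r1: "r \<ge> 1" unfolding r_def using n1 m1 e by (intro ge_one_powr_ge_zero) auto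
  have B4: "B \<ge> 4"
  proof -
    have "real m + 2 \<ge> 4" using m by simp
    moreover have "r + 1 \<ge> 1" using r1 by simp
    ultimately have "(real m + 2) * (r + 1) \<ge> 4 * 1" by (intro mult_mono) auto
    thus ?thesis unfolding B_def r_def[symmetric] by simp
  qed
  have Bpos: "B > 0" using B4 by simp
  have lg: "log 2 B \<ge> 2"
  proof -
    have "log 2 4 \<le> log 2 B" using B4 by simp
    moreover have "log 2 (4::real) = 2"
    proof -
      have "(4::real) = 2 powr 2" by simp
      thus ?thesis by (metis log_powr_cancel zero_less_numeral one_less_numeral_iff semiring_norm(76) less_irrefl)
    qed
    ultimately show ?thesis by simp
  qed
  have sreal: "real s = real_of_int \<lceil>log 2 B\<rceil>" unfolding s_def using lg by simp
  have q_eq: "real (2^s) = 2 powr real s" by (simp add: powr_realpow)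
  have qB: "real (2^s) \<ge> B"
  proof -
    have "B = 2 powr (log 2 B)" using Bpos by simp
    also have "\<dots> \<le> 2 powr real s" unfolding sreal by (intro powr_mono) auto
    finally show ?thesis using q_eq by simp
  qed
  have qB2: "real (2^s) \<le> 2 * B"
  proof -
    have "real s \<le> log 2 B + 1" unfolding sreal by linarith
    hence "2 powr real s \<le> 2 powr (log 2 B + 1)" by (intro powr_mono) auto
    also have "\<dots> = 2 * B" using Bpos by (simp add: powr_add)
    finally show ?thesis using q_eq by simp
  qed
  have s1: "s \<ge> 1" using lg unfolding s_def by linarith
  have ra: "real a \<ge> real n powr (1/real m)" "real a < real n powr (1/real m) + 1"
    unfolding a_def by (auto, linarith)
  have a1: "a \<ge> 1"
  proof -
    have "real n powr (1/real m) > 0" using n1 by simp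
    thus ?thesis using ra(1) by linarith
  qed
  have "real n = (real n powr (1/real m)) ^ m" using n1 m by (simp add: powr_power)
  also have "\<dots> \<le> real a ^ m" using ra(1) by (intro power_mono) auto
  finally have na: "n \<le> a^m" by (metis of_nat_le_iff of_nat_power)
  have exp_le: "1/real m \<le> \<epsilon>/(real m - 1)"
  proof -
    have "1/real m \<le> 1/(real m - 1)" using m1 by (intro divide_left_mono) auto
    also have "\<dots> \<le> \<epsilon>/(real m - 1)" using m1 e by (intro divide_right_mono) auto
    finally show ?thesis .
  qed
  have "real (m * (a - 1) + 2) = real m * (real a - 1) + 2" using a1 by (simp add: of_nat_diff)
  also have "\<dots> \<le> real m * r + 2"
  proof -
    have "real a - 1 \<le> real n powr (1/real m)" using ra(2) by simp
    also have "\<dots> \<le> r" unfolding r_def using exp_le n1 by (intro powr_mono) auto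
    finally show ?thesis by (simp add: mult_left_mono)
  qed
  also have "\<dots> \<le> B" unfolding B_def r_def[symmetric] using r1 by (simp add: algebra_simps)
  also have "\<dots> \<le> real (2^s)" by (rule qB)
  finally have h4: "m * (a - 1) + 2 \<le> 2^s" by (metis of_nat_le_iff)
  have "real n powr \<epsilon> = r ^ (m - 1)"
    unfolding r_def using n1 m1 by (simp add: powr_power of_nat_diff)
  also have "\<dots> \<le> B ^ (m - 1)"
    using r1 by (intro power_mono) (auto simp: B_def r_def[symmetric] algebra_simps)
  also have "\<dots> \<le> real (2^s) ^ (m - 1)" using B4 qB by (intro power_mono) auto
  finally have "real n powr \<epsilon> \<le> real ((2^s)^(m-1))" by simp
  hence "\<lceil>real n powr \<epsilon>\<rceil> \<le> int ((2^s)^(m-1))"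
    by (simp only: ceiling_le_iff of_int_of_nat_eq)
  hence h6: "nat \<lceil>real n powr \<epsilon>\<rceil> \<le> (2^s)^(m-1)" by (simp add: nat_le_iff)
  show "PIR_code_exists ((2^s)^(Suc m)) n (nat \<lceil>real n powr \<epsilon>\<rceil>)"
    using construction[OF s1 _ a1 h4 na h6] m by simp
  have "real ((2^s)^(Suc m)) = real (2^s) ^ Suc m" by simp
  also have "\<dots> \<le> (2 * B) ^ Suc m" using qB2 by (intro power_mono) auto
  also have "\<dots> \<le> (4 * (real m + 2) * r) ^ Suc m"
  proof (intro power_mono)
    have "(real m + 2) * (r + 1) \<le> (real m + 2) * (2 * r)" using r1 by (intro mult_left_mono) auto
    moreover have "2 * B = 2 * ((real m + 2) * (r + 1))" unfolding B_def r_def by simp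
    moreover have "4 * (real m + 2) * r = 2 * ((real m + 2) * (2 * r))" by simp
    ultimately show "2 * B \<le> 4 * (real m + 2) * r" by linarith
  qed (use B4 in auto)
  also have "\<dots> = (4 * (real m + 2)) ^ Suc m * r ^ Suc m" by (simp add: power_mult_distrib)
  also have "r ^ Suc m = real n powr (\<epsilon> * (real m + 1)/(real m - 1))"
  proof -
    have "r ^ Suc m = real n powr (real (Suc m) * (\<epsilon>/(real m - 1)))"
      unfolding r_def using n1 by (subst powr_power) auto
    also have "real (Suc m) * (\<epsilon>/(real m - 1)) = \<epsilon> * (real m + 1)/(real m - 1)" by simp
    finally show ?thesis .
  qed
  finally show "real ((2^s)^(Suc m)) \<le> (4*(real m+2))^(Suc m) * real n powr (\<epsilon> * (real m + 1)/(real m - 1))" .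
qed



lemma pow4_root: "(x::real) \<ge> 0 \<Longrightarrow> (x ^ 4) powr (1/4) = x"
proof -
  assume x: "x \<ge> 0"
  have "x ^ 4 = x powr 4" using powr_realpow'[of x 4] x by simp
  hence "(x ^ 4) powr (1/4) = x powr (4 * (1/4))" by (simp add: powr_powr)
  also have "\<dots> = x" using x by simp
  finally show ?thesis .
qed


definition mf :: "nat \<Rightarrow> nat" where "mf n = max 2 (nat \<lfloor>ln (real n) powr (1/4)\<rfloor>)"

lemma mf_ge2: "mf n \<ge> 2" by (simp add: mf_def)

lemma mf_large: "eventually (\<lambda>n. mf n \<ge> M) sequentially"
proof -
  define N where "N = nat \<lceil>exp (real M ^ 4)\<rceil>"
  have "mf n \<ge> M" if n: "n \<ge> N" for n
  proof -
    have "real n \<ge> exp (real M ^ 4)" using n unfolding N_def by linarith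
    hence "ln (real n) \<ge> real M ^ 4" by (metis exp_gt_zero exp_le_cancel_iff exp_ln order_less_le_trans)
    hence "ln (real n) powr (1/4) \<ge> (real M ^ 4) powr (1/4)" by (intro powr_mono2) auto
    moreover have "(real M ^ 4) powr (1/4) = real M" by (rule pow4_root) simp
    ultimately have "real M \<le> ln (real n) powr (1/4)" by simp
    hence "M \<le> nat \<lfloor>ln (real n) powr (1/4)\<rfloor>" by (simp add: le_nat_floor le_nat_iff le_floor_iff)
    thus ?thesis unfolding mf_def by simp
  qed
  thus ?thesis unfolding eventually_sequentially by blast
qed

lemma mf_bound: "eventually (\<lambda>n. (4*(real (mf n)+2))^(Suc (mf n)) \<le> real n powr (1/real (mf n))) sequentially"
proof -
  define N where "N = nat \<lceil>exp (65536::real)\<rceil>"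
  have "(4*(real (mf n)+2))^(Suc (mf n)) \<le> real n powr (1/real (mf n))" if n: "n \<ge> N" for n
  proof -
    define L where "L = ln (real n)"
    define u where "u = L powr (1/4)"
    define m where "m = mf n"
    have nE: "real n \<ge> exp 65536" using n unfolding N_def by linarith
    have npos: "real n > 0" using nE exp_gt_zero[of 65536] by linarith
    note nE
    hence L: "L \<ge> 65536" unfolding L_def by (metis exp_gt_zero exp_le_cancel_iff exp_ln order_less_le_trans)
    have u4: "u ^ 4 = L"
    proof -
      have "u ^ 4 = u powr 4" using powr_realpow'[of u 4] by (simp add: u_def)
      also have "\<dots> = L powr ((1/4) * 4)" unfolding u_def by (simp add: powr_powr)
      also have "\<dots> = L" using L by simp
      finally show ?thesis .
    qed
    have u16: "u \<ge> 16"
    proof -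
      have "(65536::real) powr (1/4) \<le> u" unfolding u_def using L by (intro powr_mono2) auto
      moreover have "(65536::real) powr (1/4) = 16"
        using pow4_root[of 16] by simp
      ultimately show ?thesis by simp
    qed
    have m_eq: "m = nat \<lfloor>u\<rfloor>" unfolding m_def mf_def u_def[symmetric] L_def[symmetric]
      using u16 by (simp add: le_nat_iff le_floor_iff)
    have mu: "real m \<le> u" unfolding m_eq using u16 by linarith
    have m2: "real m \<ge> 2" unfolding m_def using mf_ge2[of n] by simp
    have lnb: "ln (4*(real m+2)) \<le> 4*(real m+2)" using ln_le_minus_one[of "4*(real m+2)"] by simp
    have "real m * (real m + 1) * ln (4*(real m+2)) \<le> real m * (real m + 1) * (4*(real m+2))"
      using lnb m2 by (intro mult_left_mono) auto
    also have "\<dots> \<le> real m * (2 * real m) * (4 * (2 * real m))"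
      using m2 by (intro mult_mono) auto
    also have "\<dots> = 16 * real m ^ 3" by (simp add: power3_eq_cube)
    also have "\<dots> \<le> 16 * u ^ 3" using mu m2 by (intro mult_left_mono power_mono) auto
    also have "\<dots> \<le> u * u ^ 3" using u16 by (intro mult_right_mono) auto
    also have "\<dots> = L" using u4 by (simp add: power_Suc[symmetric] del: power_Suc)
    finally have key: "real m * (real m + 1) * ln (4*(real m+2)) \<le> L" .
    have "(real m + 1) * ln (4*(real m+2)) \<le> L / real m"
      using key m2 by (simp add: field_simps)
    hence "exp ((real m + 1) * ln (4*(real m+2))) \<le> exp (L / real m)" by simp
    moreover have "exp ((real m + 1) * ln (4*(real m+2))) = (4*(real m+2))^(Suc m)"
    proof -
      have pos: "4*(real m+2) > 0" by simp
      have "(real m + 1) * ln (4*(real m+2)) = ln ((4*(real m+2))^(Suc m))"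
        using ln_realpow[of "4*(real m+2)" "Suc m"] by (simp only: of_nat_Suc) (simp add: algebra_simps)
      thus ?thesis using pos by simp
    qed
    moreover have "exp (L / real m) = real n powr (1/real m)"
      unfolding L_def using npos by (simp add: powr_def)
    ultimately show ?thesis unfolding m_def by simp
  qed
  thus ?thesis unfolding eventually_sequentially by blast
qed



theorem theorem5:
  fixes \<epsilon> :: real
  assumes "\<epsilon> \<ge> 1"
  shows "\<exists>N k :: nat \<Rightarrow> nat.
           (\<forall>\<^sub>F n in sequentially. PIR_code_exists (N n) n (k n)) \<and>
           (\<lambda>n. real (k n)) \<in> \<Theta>(\<lambda>n. real n powr \<epsilon>) \<and>
           (\<forall>\<tau>>0. (\<lambda>n. real (N n)) \<in> O(\<lambda>n. real n powr (\<epsilon> + \<tau>)))"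
proof -
  define sf where "sf n = nat \<lceil>log 2 ((real (mf n) + 2) * (real n powr (\<epsilon>/(real (mf n) - 1)) + 1))\<rceil>" for n
  define N :: "nat \<Rightarrow> nat" where "N n = ((2::nat)^(sf n))^(Suc (mf n))" for n
  define k where "k n = nat \<lceil>real n powr \<epsilon>\<rceil>" for n :: nat
  have ev1: "eventually (\<lambda>n. n \<ge> 1) sequentially" by (rule eventually_ge_at_top)
  have P: "\<forall>\<^sub>F n in sequentially. PIR_code_exists (N n) n (k n)"
    using ev1 
  proof eventually_elim
    case (elim n)
    show ?case unfolding N_def k_def sf_def using finite_param(1)[OF assms elim mf_ge2] .
  qed
  have T: "(\<lambda>n. real (k n)) \<in> \<Theta>(\<lambda>n. real n powr \<epsilon>)"
  proof (rule bigthetaI'[of 1 2])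
    show "\<forall>\<^sub>F n in at_top. 1 * norm (real n powr \<epsilon>) \<le> norm (real (k n)) \<and>
                             norm (real (k n)) \<le> 2 * norm (real n powr \<epsilon>)"
      using ev1
    proof eventually_elim
      case (elim n)
      have g1: "real n powr \<epsilon> \<ge> 1" using elim assms by (intro ge_one_powr_ge_zero) auto
      have "real (k n) \<ge> real n powr \<epsilon>" "real (k n) \<le> real n powr \<epsilon> + 1"
        unfolding k_def using g1 by linarith+
      thus ?case using g1 by simp
    qed
  qed auto
  have O: "(\<lambda>n. real (N n)) \<in> O(\<lambda>n. real n powr (\<epsilon> + \<tau>))" if tau: "\<tau> > 0" for \<tau>
  proof (rule bigoI[of _ 1])
    define M where "M = nat \<lceil>(2*\<epsilon>+1)/\<tau>\<rceil> + 2"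
    show "\<forall>\<^sub>F n in at_top. norm (real (N n)) \<le> 1 * norm (real n powr (\<epsilon> + \<tau>))"
      using ev1 mf_large[of M] mf_bound
    proof eventually_elim
      case (elim n)
      define m where "m = mf n"
      have m2: "real m \<ge> 2" unfolding m_def using mf_ge2[of n] by simp
      have mM: "real m \<ge> real M" using elim unfolding m_def by simp
      have n1: "real n \<ge> 1" using elim by simp
      have "real m - 1 \<ge> (2*\<epsilon>+1)/\<tau> + 1" using mM unfolding M_def by linarith
      hence c: "(2*\<epsilon>+1) \<le> \<tau> * (real m - 1)" using tau
        by (smt (verit, ccfv_SIG) mult_left_mono pos_divide_le_eq mult.commute)
      have m1: "real m - 1 > 0" using m2 by simp
      have ex: "1/real m + \<epsilon> * (real m + 1)/(real m - 1) \<le> \<epsilon> + \<tau>"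
      proof -
        have "1/real m \<le> 1/(real m - 1)" using m1 by (intro divide_left_mono) auto
        moreover have "\<epsilon> * (real m + 1)/(real m - 1) = \<epsilon> + 2*\<epsilon>/(real m - 1)"
          using m1 by (simp add: field_simps)
        moreover have "1/(real m - 1) + 2*\<epsilon>/(real m - 1) \<le> \<tau>"
          using c m1 by (simp add: add_divide_distrib[symmetric] pos_divide_le_eq mult.commute)
        ultimately show ?thesis by linarith
      qed
      have "real (N n) \<le> (4*(real m+2))^(Suc m) * real n powr (\<epsilon> * (real m + 1)/(real m - 1))"
        unfolding N_def sf_def m_def using finite_param(2)[OF assms elim(1) mf_ge2] by simp
      also have "\<dots> \<le> real n powr (1/real m) * real n powr (\<epsilon> * (real m + 1)/(real m - 1))"
        using elim(3) unfolding m_def by (intro mult_right_mono) auto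
      also have "\<dots> = real n powr (1/real m + \<epsilon> * (real m + 1)/(real m - 1))" by (simp add: powr_add)
      also have "\<dots> \<le> real n powr (\<epsilon> + \<tau>)" using ex n1 by (intro powr_mono) auto
      finally show ?case by simp
    qed
  qed
  show ?thesis using P T O by blast
qed

end
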